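(* Let $(M,B)$ be a based $\mathbf U$-module (in Lusztig's sense) with weights bounded above, with bar involution $\psi$, and let ${}_{\mathcal A}M$ be the $\mathcal A$-lattice spanned by $B$, $\mathcal A=\mathbb Z[v,v^{-1}]$. Assume the anti-linear involution $\psi_\imath:=\Upsilon\circ\psi$ of $M$ preserves ${}_{\mathcal A}M$. Then (1) $M$ admits a unique basis $B^\imath=\{b^\imath\mid b\in B\}$ such that each $b^\imath$ is $\psi_\imath$-invariant and $b^\imath\in b+\sum_{b'\in B,\,|b|<|b'|}v^{-1}\mathbb Z[v^{-1}]\,b'$; (2) $B^\imath$ is an $\mathcal A$-basis of ${}_{\mathcal A}M$ and a $\mathbb Z[v^{-1}]$-basis of the $\mathbb Z[v^{-1}]$-lattice spanned by $B$.
   Context: Setting of a quantum symmetric pair $(\mathbf U,\mathbf U^\imath)$ with parameters as in the quasi K-matrix theorem: $\mathbf U^\imath\subset\mathbf U$ is generated by $B_i=F_i+\varsigma_iT_{w_\bullet}(E_{\tau i})\tilde K_i^{-1}+\kappa_i\tilde K_i^{-1}$ ($i\in\mathbb I_\circ$), $K_\mu$ ($\theta\mu=\mu$), $E_j,F_j$ ($j\in\mathbb I_\bullet$), and $\Upsilon=\sum_\mu\Upsilon_\mu$ ($\Upsilon_\mu\in\mathbf U^+_\mu$, $\Upsilon_0=1$) is the quasi K-matrix, characterized by $\psi_\imath(u)\Upsilon=\Upsilon\psi(u)$ for all $u\in\mathbf U^\imath$, where $\psi_\imath$ is the bar involution of $\mathbf U^\imath$ fixing $B_i,E_j,F_j$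 and inverting $K_\mu$; $\Upsilon$ acts on modules with weights bounded above. $|x|$ denotes the weight of a weight vector $x$; the partial order on $X$ is $\lambda\le\lambda'$ iff $\lambda'-\lambda\in\mathbb N\mathbb I$. Then $M$ with $\psi_\imath$ satisfies $\psi_\imath(um)=\psi_\imath(u)\psi_\imath(m)$ for $u\in\mathbf U^\imath$. *)

theory Defs
  imports "HOL-Library.FuncSet" "HOL-Computational_Algebra.Polynomial" "HOL-Computational_Algebra.Fraction_Field"
begin

type_synonym qv = "rat poly fract"

definition vv :: qv where "vv = Fract [:0, 1:] 1"

definition vinv :: qv where "vinv = inverse vv"

definition fpoly :: "rat poly \<Rightarrow> qv \<Rightarrow> qv" where
  "fpoly p x = poly (map_poly (\<lambda>c. Fract [:c:] 1) p) x"

text \<open>Bar involution of Q(v): the field automorphism fixing Q with v mapped to v^-1.\<close>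
definition qbar :: "qv \<Rightarrow> qv" where
  "qbar x = (SOME y. \<exists>p q. q \<noteq> 0 \<and> x = Fract p q \<and> y = fpoly p vinv / fpoly q vinv)"

definition Zvinv :: "qv set" where
  "Zvinv = {fpoly (map_poly of_int p) vinv | p :: int poly. True}"

definition vinvZvinv :: "qv set" where
  "vinvZvinv = {vinv * x | x. x \<in> Zvinv}"

definition Aring :: "qv set" where
  "Aring = {vv ^ n * x | n x. x \<in> Zvinv}"

definition lattice :: "(qv \<Rightarrow> 'm \<Rightarrow> 'm) \<Rightarrow> qv set \<Rightarrow> 'm::ab_group_add set \<Rightarrow> 'm set" where
  "lattice sc R S = {m. \<exists>T c. finite T \<and> T \<subseteq> S \<and> (\<forall>t\<in>T. c t \<in> R) \<and> m = (\<Sum>t\<in>T. sc (c t) t)}"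

definition indep_over :: "(qv \<Rightarrow> 'm \<Rightarrow> 'm) \<Rightarrow> qv set \<Rightarrow> 'm::ab_group_add set \<Rightarrow> bool" where
  "indep_over sc R S \<longleftrightarrow> (\<forall>T c. finite T \<and> T \<subseteq> S \<and> (\<forall>t\<in>T. c t \<in> R) \<and> (\<Sum>t\<in>T. sc (c t) t) = 0
        \<longrightarrow> (\<forall>t\<in>T. c t = 0))"

definition lattice_basis :: "(qv \<Rightarrow> 'm \<Rightarrow> 'm) \<Rightarrow> qv set \<Rightarrow> 'm::ab_group_add set \<Rightarrow> 'm set \<Rightarrow> bool" where
  "lattice_basis sc R S L \<longleftrightarrow> indep_over sc R S \<and> lattice sc R S = L"

definition nsmul :: "nat \<Rightarrow> 'w::ab_group_add \<Rightarrow> 'w" where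
  "nsmul n a = (\<Sum>k<n. a)"

definition NI :: "'i set \<Rightarrow> ('i \<Rightarrow> 'w::ab_group_add) \<Rightarrow> 'w set" where
  "NI I alpha = {(\<Sum>i\<in>I. nsmul (n i) (alpha i)) | n. True}"

definition wle :: "'i set \<Rightarrow> ('i \<Rightarrow> 'w::ab_group_add) \<Rightarrow> 'w \<Rightarrow> 'w \<Rightarrow> bool" where
  "wle I alpha l l' \<longleftrightarrow> l' - l \<in> NI I alpha"

definition wlt :: "'i set \<Rightarrow> ('i \<Rightarrow> 'w::ab_group_add) \<Rightarrow> 'w \<Rightarrow> 'w \<Rightarrow> bool" where
  "wlt I alpha l l' \<longleftrightarrow> wle I alpha l l' \<and> l \<noteq> l'"

text \<open>Upsilon acts as the (locally finite, since weights are bounded above) sum of its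
  components Upsilon_mu.\<close>
definition Ups_act :: "('w \<Rightarrow> 'm \<Rightarrow> 'm) \<Rightarrow> 'm::ab_group_add \<Rightarrow> 'm" where
  "Ups_act ups m = (\<Sum>\<mu>\<in>{\<mu>. ups \<mu> m \<noteq> 0}. ups \<mu> m)"

end

theory Submission
  imports Defs
begin


lemma mp_add:
  assumes "h 0 = 0" "\<And>a b. h (a + b) = h a + h b"
  shows "map_poly h (p + q) = map_poly h p + map_poly h q"
  by (intro poly_eqI) (simp add: coeff_map_poly assms)

lemma poly_mp_mult:
  fixes h :: "'a::comm_ring_1 \<Rightarrow> 'b::comm_ring_1"
  assumes h0: "h 0 = 0" and ha: "\<And>a b. h (a + b) = h a + h b" and hm: "\<And>a b. h (a * b) = h a * h b"
  shows "poly (map_poly h (p * q)) x = poly (map_poly h p) x * poly (map_poly h q) x"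
proof (induction p)
  case 0
  then show ?case by (simp add: h0)
next
  case (pCons a p)
  have "map_poly h (pCons a p * q) = map_poly h (smult a q) + map_poly h (pCons 0 (p * q))"
    by (simp add: mp_add[OF h0 ha])
  also have "\<dots> = smult (h a) (map_poly h q) + pCons 0 (map_poly h (p * q))"
    using h0 hm by (simp add: map_poly_smult map_poly_pCons)
  finally show ?case using pCons h0 by (simp add: map_poly_pCons algebra_simps)
qed

definition G :: "rat \<Rightarrow> qv" where "G c = Fract [:c:] 1"

lemma G0[simp]: "G 0 = 0" by (simp add: G_def Zero_fract_def)
lemma G1[simp]: "G 1 = 1" by (simp add: G_def One_fract_def one_pCons)
lemma Gadd: "G (a + b) = G a + G b" by (simp add: G_def)
lemma Gmult: "G (a * b) = G a * G b" by (simp add: G_def mult.commute)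
lemma Gnz: "x \<noteq> 0 \<Longrightarrow> G x \<noteq> 0" by (simp add: G_def Zero_fract_def eq_fract)

lemma fpoly_G: "fpoly p x = poly (map_poly G p) x"
  by (simp add: fpoly_def G_def[abs_def])

lemma fpoly_add: "fpoly (p + q) x = fpoly p x + fpoly q x"
  by (simp add: fpoly_G mp_add Gadd)
lemma fpoly_mult: "fpoly (p * q) x = fpoly p x * fpoly q x"
  by (simp add: fpoly_G poly_mp_mult Gadd Gmult)

lemma vv_eq: "vv = Fract [:0,1:] 1" by (simp add: vv_def)
lemma vv_nz: "vv \<noteq> 0" by (simp add: vv_def Zero_fract_def eq_fract)
lemma vinv_nz: "vinv \<noteq> 0" by (simp add: vinv_def vv_nz)
lemma vv_vinv: "vv * vinv = 1" by (simp add: vinv_def vv_nz)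

lemma EVr: "poly (map_poly G r) vv = Fract r 1"
proof (induction r)
  case 0
  then show ?case by (simp add: Zero_fract_def)
next
  case (pCons a r)
  have "pCons a r = [:a:] + [:0,1:] * r" by simp
  then have "Fract (pCons a r) 1 = Fract [:a:] 1 + Fract [:0,1:] 1 * Fract r 1"
    by simp
  note eq = this
  have "poly (map_poly G (pCons a r)) vv = G a + vv * Fract r 1" using pCons.IH by (simp add: map_poly_pCons)
  also have "\<dots> = Fract (pCons a r) 1" using eq by (simp add: G_def vv_eq)
  finally show ?case .
qed

lemma reflect_G: "reflect_poly (map_poly G q) = map_poly G (reflect_poly q)"
  by (intro poly_eqI) (simp add: coeff_reflect_poly coeff_map_poly degree_map_poly Gnz)

lemma fpoly_vinv_nz: assumes "q \<noteq> 0" shows "fpoly q vinv \<noteq> 0"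
proof
  assume "fpoly q vinv = 0"
  then have "poly (reflect_poly (map_poly G q)) vv = 0"
    using poly_reflect_poly_nz[OF vv_nz, of "map_poly G q"]
    by (simp add: fpoly_G vinv_def)
  then have "Fract (reflect_poly q) 1 = 0" by (simp add: reflect_G EVr)
  then have "reflect_poly q = 0" by (simp add: Zero_fract_def eq_fract)
  with assms show False by simp
qed

lemma qbar_Fract: assumes "q \<noteq> 0" shows "qbar (Fract p q) = fpoly p vinv / fpoly q vinv"
proof -
  let ?P = "\<lambda>y. \<exists>p' q'. q' \<noteq> 0 \<and> Fract p q = Fract p' q' \<and> y = fpoly p' vinv / fpoly q' vinv"
  have "?P (fpoly p vinv / fpoly q vinv)" using assms by blast
  then have "?P (qbar (Fract p q))" unfolding qbar_def by (rule someI)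
  then obtain p' q' where pq: "q' \<noteq> 0" "Fract p q = Fract p' q'"
     "qbar (Fract p q) = fpoly p' vinv / fpoly q' vinv" by blast
  have "p * q' = p' * q" using pq assms by (simp add: eq_fract)
  then have "fpoly p vinv * fpoly q' vinv = fpoly p' vinv * fpoly q vinv"
    by (metis fpoly_mult)
  then show ?thesis using pq fpoly_vinv_nz[OF assms] fpoly_vinv_nz[OF pq(1)]
    by (simp add: frac_eq_eq)
qed

lemma qbar_add: "qbar (x + y) = qbar x + qbar y"
proof (cases x, cases y)
  fix a b c d assume x: "x = Fract a b" "b \<noteq> 0" and y: "y = Fract c d" "d \<noteq> 0"
  show ?thesis using x y fpoly_vinv_nz[OF x(2)] fpoly_vinv_nz[OF y(2)]
    by (simp add: qbar_Fract fpoly_add fpoly_mult field_simps)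
qed

lemma qbar_mult: "qbar (x * y) = qbar x * qbar y"
proof (cases x, cases y)
  fix a b c d assume x: "x = Fract a b" "b \<noteq> 0" and y: "y = Fract c d" "d \<noteq> 0"
  show ?thesis using x y fpoly_vinv_nz[OF x(2)] fpoly_vinv_nz[OF y(2)]
    by (simp add: qbar_Fract fpoly_add fpoly_mult field_simps)
qed

lemma fpoly_const: "fpoly [:c:] x = G c"
  by (simp add: fpoly_G map_poly_pCons)

lemma fpoly_1[simp]: "fpoly 1 x = 1" by (simp add: fpoly_G)

lemma qbar_G: "qbar (G c) = G c"
proof -
  have "qbar (Fract [:c:] 1) = fpoly [:c:] vinv / fpoly 1 vinv" by (rule qbar_Fract) simp
  then show ?thesis by (simp add: fpoly_const G_def)
qed

lemma qbar_1: "qbar 1 = 1" using qbar_G[of 1] by simp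
lemma qbar_0: "qbar 0 = 0" using qbar_G[of 0] by simp
lemma qbar_minus: "qbar (- x) = - qbar x"
  using qbar_add[of x "-x"] qbar_0 by (simp add: eq_neg_iff_add_eq_0)
lemma qbar_diff: "qbar (x - y) = qbar x - qbar y"
  using qbar_add[of x "-y"] qbar_minus by simp

lemma qbar_vv: "qbar vv = vinv"
proof -
  have "qbar (Fract [:0,1:] 1) = fpoly [:0,1:] vinv / fpoly 1 vinv" by (rule qbar_Fract) simp
  then show ?thesis by (simp add: vv_eq fpoly_G map_poly_pCons)
qed

lemma qbar_vinv: "qbar vinv = vv"
proof -
  have "qbar vv * qbar vinv = 1" using qbar_mult[of vv vinv] vv_vinv qbar_1 by simp
  then show ?thesis using qbar_vv vv_vinv vinv_nz by (metis mult.commute mult_cancel_left)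
qed


lemma G_of_int: "G (of_int c) = of_int c"
proof (induction c rule: int_induct[where k=0])
  case base then show ?case by simp
next
  case (step1 i) then show ?case by (simp add: Gadd)
next
  case (step2 i)
  have "of_int i = of_int (i-1) + (1::rat)" by simp
  then have "G (of_int i) = G (of_int (i-1)) + 1" by (metis Gadd G1)
  then show ?case using step2 by (simp add: algebra_simps)
qed

definition EI :: "qv \<Rightarrow> int poly \<Rightarrow> qv" where
  "EI x p = poly (map_poly of_int p) x"

lemma fpoly_EI: "fpoly (map_poly of_int p) x = EI x p"
  by (simp add: fpoly_G EI_def map_poly_map_poly o_def G_of_int)

lemma EI_0[simp]: "EI x 0 = 0" by (simp add: EI_def)
lemma EI_pCons: "EI x (pCons c p) = of_int c + x * EI x p" by (simp add: EI_def map_poly_pCons)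
lemma EI_1[simp]: "EI x 1 = 1" by (simp add: EI_def)
lemma EI_const: "EI x [:c:] = of_int c" by (simp add: EI_pCons)
lemma EI_add: "EI x (p + q) = EI x p + EI x q" by (simp add: EI_def mp_add)
lemma EI_mult: "EI x (p * q) = EI x p * EI x q" by (simp add: EI_def poly_mp_mult)
lemma EI_minus: "EI x (- p) = - EI x p"
  using EI_add[of x p "-p"] by (simp add: eq_neg_iff_add_eq_0)
lemma EI_monom: "EI x (monom c n) = of_int c * x ^ n"
  by (simp add: EI_def map_poly_monom poly_monom)
lemma EI_smult: "EI x (smult c p) = of_int c * EI x p"
  by (metis EI_const EI_mult smult_one mult_smult_left mult_1)

lemma qbar_of_int: "qbar (of_int c) = of_int c"
  using qbar_G[of "of_int c"] by (simp add: G_of_int)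

lemma qbar_EI_vinv: "qbar (EI vinv p) = EI vv p"
  by (induction p) (simp_all add: EI_pCons qbar_add qbar_mult qbar_of_int qbar_vinv qbar_0)
lemma qbar_EI_vv: "qbar (EI vv p) = EI vinv p"
  by (induction p) (simp_all add: EI_pCons qbar_add qbar_mult qbar_of_int qbar_vv qbar_0)

lemma EI_vv_Fract: "EI vv p = Fract (map_poly of_int p) 1"
  by (simp add: fpoly_EI[symmetric] fpoly_G EVr)

lemma EI_vv_zero: "EI vv p = 0 \<Longrightarrow> p = 0"
proof -
  assume "EI vv p = 0"
  then have "map_poly (of_int :: int \<Rightarrow> rat) p = 0"
    by (simp add: EI_vv_Fract Zero_fract_def eq_fract)
  then show "p = 0" by (simp add: map_poly_eq_0_iff)
qed

lemma Zvinv_eq: "Zvinv = range (EI vinv)"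
  by (auto simp: Zvinv_def fpoly_EI)
lemma vinvZvinv_eq: "vinvZvinv = {vinv * EI vinv p | p. True}"
  by (auto simp: vinvZvinv_def Zvinv_eq)
lemma Aring_eq: "Aring = {vv ^ n * EI vinv p | n p. True}"
  by (auto simp: Aring_def Zvinv_eq)

lemma VQ: "degree q \<le> n \<Longrightarrow> \<exists>r. degree r \<le> n \<and> vv ^ n * EI vinv q = EI vv r"
proof (induction q arbitrary: n)
  case 0
  then show ?case by (intro exI[of _ 0]) simp
next
  case (pCons a q)
  show ?case
  proof (cases "q = 0")
    case True
    then show ?thesis
      by (intro exI[of _ "monom a n"]) (simp add: EI_pCons EI_monom degree_monom_le mult.commute)
  next
    case False
    then have "degree (pCons a q) = Suc (degree q)" by simp
    with pCons.prems obtain n' where n: "n = Suc n'" "degree q \<le> n'"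
      by (cases n) auto
    from pCons.IH[OF n(2)] obtain r where r: "degree r \<le> n'" "vv ^ n' * EI vinv q = EI vv r" by blast
    have "vv ^ n * EI vinv (pCons a q) = of_int a * vv ^ n + vv ^ n' * ((vv * vinv) * EI vinv q)"
      by (simp add: EI_pCons n algebra_simps)
    also have "\<dots> = EI vv (monom a n + r)" using r vv_vinv by (simp add: EI_add EI_monom)
    finally show ?thesis using r n
      by (intro exI[of _ "monom a n + r"]) (simp add: degree_add_le degree_monom_le le_SucI)
  qed
qed

lemma UD:
  assumes "qbar (vinv * EI vinv p) + of_int z + vinv * EI vinv q = 0"
  shows "vinv * EI vinv p = 0 \<and> z = 0 \<and> vinv * EI vinv q = 0"
proof -
  define m where "m = Suc (degree q)"
  obtain r where r: "degree r \<le> degree q" "vv ^ degree q * EI vinv q = EI vv r"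
    using VQ[of q "degree q"] by auto
  have qb: "qbar (vinv * EI vinv p) = EI vv (pCons 0 p)"
    by (simp add: qbar_mult qbar_vinv qbar_EI_vinv EI_pCons)
  have c: "vv ^ m * (vinv * EI vinv q) = EI vv r"
    using r vv_vinv by (simp add: m_def algebra_simps)
  have "0 = vv ^ m * (qbar (vinv * EI vinv p) + of_int z + vinv * EI vinv q)"
    using assms by simp
  also have "\<dots> = EI vv (monom 1 m * pCons 0 p + monom z m + r)"
    unfolding qb distrib_left c by (simp only: EI_add EI_mult EI_monom) (simp add: algebra_simps)
  finally have t0: "monom 1 m * pCons 0 p + monom z m + r = 0"
    using EI_vv_zero by metis
  have rk: "coeff r k = 0" if "k \<ge> m" for k
    using r that by (intro coeff_eq_0) (simp add: m_def)
  have cp: "coeff (pCons 0 p) j = 0" for j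
  proof -
    have "coeff (monom 1 m * pCons 0 p + monom z m + r) (m + j) = 0" using t0 by simp
    then show ?thesis using rk[of "m+j"]
      by (simp only: coeff_add coeff_monom_mult coeff_monom) (cases j, auto)
  qed
  then have p0: "p = 0" by (metis coeff_pCons_Suc poly_eqI coeff_0)
  have "coeff (monom 1 m * pCons 0 p + monom z m + r) m = 0" using t0 by simp
  then have z0: "z = 0" using rk[of m] by (simp only: p0 coeff_add coeff_monom_mult coeff_monom) simp
  have "r = 0" using t0 by (simp add: p0 z0)
  then have "vv ^ m * (vinv * EI vinv q) = 0" using c by simp
  then have "vinv * EI vinv q = 0" using vv_nz by simp
  then show ?thesis using p0 z0 by simp
qed


definition rng :: "qv set \<Rightarrow> bool" where
  "rng R \<longleftrightarrow> 0 \<in> R \<and> (\<forall>a\<in>R. \<forall>b\<in>R. a + b \<in> R \<and> a * b \<in> R \<and> - a \<in> R)"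

definition rng1 :: "qv set \<Rightarrow> bool" where
  "rng1 R \<longleftrightarrow> rng R \<and> 1 \<in> R \<and> vinvZvinv \<subseteq> R"

lemma rng_Z: "rng Zvinv"
  unfolding rng_def Zvinv_eq
proof (intro conjI ballI)
  show "0 \<in> range (EI vinv)" by (metis EI_0 rangeI)
  fix a b assume "a \<in> range (EI vinv)" "b \<in> range (EI vinv)"
  then obtain p q where "a = EI vinv p" "b = EI vinv q" by blast
  then show "a + b \<in> range (EI vinv)" "a * b \<in> range (EI vinv)" "- a \<in> range (EI vinv)"
    by (metis EI_add rangeI, metis EI_mult rangeI, metis EI_minus rangeI)
qed

lemma V_sub_Z: "vinvZvinv \<subseteq> Zvinv"
  unfolding vinvZvinv_eq Zvinv_eq by (auto simp: image_iff) (metis EI_pCons add_0 of_int_0)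

lemma V_mem: "x \<in> vinvZvinv \<longleftrightarrow> (\<exists>p. x = vinv * EI vinv p)"
  by (auto simp: vinvZvinv_eq)

lemma rng_V: "rng vinvZvinv"
proof -
  have "0 \<in> vinvZvinv" unfolding V_mem by (intro exI[of _ 0]) simp
  moreover have "a + b \<in> vinvZvinv \<and> a * b \<in> vinvZvinv \<and> - a \<in> vinvZvinv"
    if hab: "a \<in> vinvZvinv" "b \<in> vinvZvinv" for a b
  proof -
    obtain p q where ab: "a = vinv * EI vinv p" "b = vinv * EI vinv q" using hab unfolding V_mem by blast
    have "a + b = vinv * EI vinv (p + q)" using ab by (simp add: EI_add algebra_simps)
    moreover have "- a = vinv * EI vinv (- p)" using ab by (simp add: EI_minus)
    moreover have "a * b = vinv * EI vinv (pCons 0 (p * q))" using ab by (simp add: EI_pCons EI_mult algebra_simps)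
    ultimately show ?thesis unfolding V_mem by blast
  qed
  ultimately show ?thesis unfolding rng_def by blast
qed

lemma Z_sub_A: "Zvinv \<subseteq> Aring"
  unfolding Zvinv_eq Aring_eq by auto (metis mult_1 power_0)

lemma vinv_pow_Z: "\<exists>r. vinv ^ k * EI vinv p = EI vinv r"
proof (induction k)
  case 0 then show ?case by auto
next
  case (Suc k)
  then obtain r where "vinv ^ k * EI vinv p = EI vinv r" by blast
  then show ?case by (intro exI[of _ "pCons 0 r"]) (simp add: EI_pCons algebra_simps)
qed

lemma vv_pow_split: "n \<le> m \<Longrightarrow> vv ^ n = vv ^ m * vinv ^ (m - n)"
proof -
  assume "n \<le> m"
  then have "vv ^ m * vinv ^ (m - n) = vv ^ n * (vv * vinv) ^ (m - n)"
    by (simp add: power_mult_distrib power_add[symmetric] mult.assoc)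
  then show ?thesis using vv_vinv by simp
qed

lemma A_add_aux: "n \<le> m \<Longrightarrow> \<exists>k r. vv ^ n * EI vinv p + vv ^ m * EI vinv q = vv ^ k * EI vinv r"
proof -
  assume nm: "n \<le> m"
  obtain r where r: "vinv ^ (m - n) * EI vinv p = EI vinv r" using vinv_pow_Z by blast
  have "vv ^ n * EI vinv p + vv ^ m * EI vinv q = vv ^ m * EI vinv (r + q)"
    using vv_pow_split[OF nm] r by (simp add: EI_add algebra_simps)
  then show ?thesis by blast
qed

lemma A_mem: "x \<in> Aring \<longleftrightarrow> (\<exists>n p. x = vv ^ n * EI vinv p)"
  by (auto simp: Aring_eq)

lemma rng_A: "rng Aring"
proof -
  have "0 \<in> Aring" unfolding A_mem by (intro exI[of _ 0] exI[of _ 0]) simp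
  moreover have "a + b \<in> Aring \<and> a * b \<in> Aring \<and> - a \<in> Aring"
    if hab: "a \<in> Aring" "b \<in> Aring" for a b
  proof -
    obtain n p m q where ab: "a = vv ^ n * EI vinv p" "b = vv ^ m * EI vinv q" using hab unfolding A_mem by blast
    have "\<exists>k r. a + b = vv ^ k * EI vinv r"
      using A_add_aux[of n m p q] A_add_aux[of m n q p] ab by (cases "n \<le> m") (auto simp: add.commute)
    moreover have "- a = vv ^ n * EI vinv (- p)" using ab by (simp add: EI_minus)
    moreover have "a * b = vv ^ (n + m) * EI vinv (p * q)" using ab by (simp add: EI_mult power_add algebra_simps)
    ultimately show ?thesis unfolding A_mem by blast
  qed
  ultimately show ?thesis unfolding rng_def by blast
qed

lemma one_Z: "1 \<in> Zvinv" unfolding Zvinv_eq by (metis EI_1 rangeI)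

lemma rng1_Z: "rng1 Zvinv" using rng_Z V_sub_Z one_Z by (simp add: rng1_def)
lemma rng1_A: "rng1 Aring" using rng_A V_sub_Z Z_sub_A one_Z by (auto simp: rng1_def)

lemma qbar_V_fixed: "c \<in> vinvZvinv \<Longrightarrow> qbar c = c \<Longrightarrow> c = 0"
proof -
  assume c: "c \<in> vinvZvinv" "qbar c = c"
  then obtain p where p: "c = vinv * EI vinv p" by (auto simp: vinvZvinv_eq)
  have "qbar (vinv * EI vinv p) + of_int 0 + vinv * EI vinv (- p) = 0"
    using c p by (simp add: EI_minus)
  then show "c = 0" using UD p by blast
qed

lemma DE: "\<exists>p z q. vv ^ n * EI vinv s = qbar (vinv * EI vinv p) + of_int z + vinv * EI vinv q"
proof (induction n)
  case 0
  obtain a s' where "s = pCons a s'" by (cases s)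
  then show ?case
    by (intro exI[of _ 0] exI[of _ a] exI[of _ s']) (simp add: EI_pCons qbar_0)
next
  case (Suc n)
  then obtain p z q where e: "vv ^ n * EI vinv s = qbar (vinv * EI vinv p) + of_int z + vinv * EI vinv q"
    by blast
  obtain a q' where q: "q = pCons a q'" by (cases q)
  have "vv ^ Suc n * EI vinv s = vv * (qbar (vinv * EI vinv p) + of_int z) + (vv * vinv) * EI vinv q"
    by (simp add: e algebra_simps)
  also have "\<dots> = qbar (vinv * EI vinv (pCons 0 p + [:z:])) + of_int a + vinv * EI vinv q'"
    using vv_vinv by (simp add: q EI_pCons EI_add EI_const qbar_mult qbar_add qbar_vinv qbar_of_int algebra_simps)
  finally show ?case by blast
qed

lemma qbar_qbar_V: "qbar (qbar (vinv * EI vinv p)) = vinv * EI vinv p"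
  by (simp add: qbar_mult qbar_vinv qbar_vv qbar_EI_vinv qbar_EI_vv)

lemma qbar_A_anti: "s \<in> Aring \<Longrightarrow> qbar s = - s \<Longrightarrow> \<exists>c\<in>vinvZvinv. c - qbar c = s"
proof -
  assume s: "s \<in> Aring" "qbar s = - s"
  then obtain n t where st: "s = vv ^ n * EI vinv t" by (auto simp: Aring_eq)
  obtain p z q where e: "s = qbar (vinv * EI vinv p) + of_int z + vinv * EI vinv q"
    using DE[of n t] st by blast
  have qs: "qbar s = vinv * EI vinv p + of_int z + qbar (vinv * EI vinv q)"
    unfolding e by (simp add: qbar_add qbar_qbar_V qbar_of_int)
  have "qbar (vinv * EI vinv (p + q)) + of_int (2 * z) + vinv * EI vinv (p + q) = s + qbar s"
    unfolding qs by (subst e) (simp add: EI_add qbar_add qbar_mult distrib_left)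
  also have "\<dots> = 0" using s by simp
  finally have u: "vinv * EI vinv (p + q) = 0 \<and> 2 * z = 0" using UD by blast
  then have z: "z = 0" by simp
  have pq: "vinv * EI vinv p = - (vinv * EI vinv q)" using u by (simp add: EI_add distrib_left eq_neg_iff_add_eq_0)
  show ?thesis
  proof (intro bexI[of _ "vinv * EI vinv q"])
    show "vinv * EI vinv q \<in> vinvZvinv" by (auto simp: vinvZvinv_eq)
    show "vinv * EI vinv q - qbar (vinv * EI vinv q) = s"
      unfolding e z pq by (simp add: qbar_minus)
  qed
qed


lemma nsmul_0[simp]: "nsmul 0 a = 0" by (simp add: nsmul_def)
lemma nsmul_add: "nsmul (m + n) a = nsmul m a + nsmul n a"
  by (induction n) (simp_all add: nsmul_def add.assoc)

lemma sum_nsmul_add: "(\<Sum>i\<in>I. nsmul (n i) (alpha i)) + (\<Sum>i\<in>I. nsmul (m i) (alpha i))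
   = (\<Sum>i\<in>I. nsmul (n i + m i) (alpha i))"
  by (simp add: nsmul_add sum.distrib)

locale qsp = vector_space sc for sc :: "qv \<Rightarrow> 'm::ab_group_add \<Rightarrow> 'm" (infixr \<open>*s\<close> 75) +
  fixes B :: "'m set"
    and wt :: "'m \<Rightarrow> 'w::ab_group_add"
    and I :: "'i set" and alpha :: "'i \<Rightarrow> 'w"
    and psi :: "'m \<Rightarrow> 'm"
    and ups :: "'w \<Rightarrow> 'm \<Rightarrow> 'm"
  assumes I_fin: "finite I"
    and alpha_indep: "\<And>n m. (\<Sum>i\<in>I. nsmul (n i) (alpha i)) = (\<Sum>i\<in>I. nsmul (m i) (alpha i))
                        \<Longrightarrow> \<forall>i\<in>I. n i = m i"
    and indepB: "independent B" and spanB: "span B = UNIV"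
    and bounded: "\<exists>S. finite S \<and> (\<forall>b\<in>B. \<exists>l\<in>S. wle I alpha (wt b) l)"
    and psi_add: "\<And>x y. psi (x + y) = psi x + psi y"
    and psi_anti: "\<And>c x. psi (sc c x) = sc (qbar c) (psi x)"
    and psi_B: "\<And>b. b \<in> B \<Longrightarrow> psi b = b"
    and ups_lin: "\<And>\<mu>. Vector_Spaces.linear sc sc (ups \<mu>)"
    and ups_0: "ups 0 = id"
    and ups_supp: "\<And>\<mu>. \<mu> \<notin> NI I alpha \<Longrightarrow> ups \<mu> = (\<lambda>_. 0)"
    and ups_wt: "\<And>\<mu> b. b \<in> B \<Longrightarrow> ups \<mu> b \<in> span {b'\<in>B. wt b' = wt b + \<mu>}"
    and psii_inv: "\<And>x. Ups_act ups (psi (Ups_act ups (psi x))) = x"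
    and psii_lattice: "(\<lambda>x. Ups_act ups (psi x)) ` lattice sc Aring B \<subseteq> lattice sc Aring B"
begin

abbreviation le (infix \<open>\<preceq>\<close> 50) where "le \<equiv> wle I alpha"
abbreviation lt (infix \<open>\<prec>\<close> 50) where "lt \<equiv> wlt I alpha"

lemma NI_iff: "x \<in> NI I alpha \<longleftrightarrow> (\<exists>n. x = (\<Sum>i\<in>I. nsmul (n i) (alpha i)))"
  by (auto simp: NI_def)

lemma le_refl: "x \<preceq> x"
  unfolding wle_def NI_iff by (intro exI[of _ "\<lambda>_. 0"]) simp

lemma le_trans: "x \<preceq> y \<Longrightarrow> y \<preceq> z \<Longrightarrow> x \<preceq> z"
  unfolding wle_def NI_iff
proof -
  assume "\<exists>n. y - x = (\<Sum>i\<in>I. nsmul (n i) (alpha i))" "\<exists>n. z - y = (\<Sum>i\<in>I. nsmul (n i) (alpha i))"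
  then obtain n m where nm: "y - x = (\<Sum>i\<in>I. nsmul (n i) (alpha i))" "z - y = (\<Sum>i\<in>I. nsmul (m i) (alpha i))"
    by blast
  have "z - x = (z - y) + (y - x)" by simp
  also have "\<dots> = (\<Sum>i\<in>I. nsmul (m i + n i) (alpha i))" using nm sum_nsmul_add by metis
  finally have e: "z - x = (\<Sum>i\<in>I. nsmul (m i + n i) (alpha i))" .
  show "\<exists>n. z - x = (\<Sum>i\<in>I. nsmul (n i) (alpha i))" by (intro exI[of _ "\<lambda>i. m i + n i"]) (simp add: e)
qed

lemma le_antisym: "x \<preceq> y \<Longrightarrow> y \<preceq> x \<Longrightarrow> x = y"
  unfolding wle_def NI_iff
proof -
  assume "\<exists>n. y - x = (\<Sum>i\<in>I. nsmul (n i) (alpha i))" "\<exists>n. x - y = (\<Sum>i\<in>I. nsmul (n i) (alpha i))"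
  then obtain n m where nm: "y - x = (\<Sum>i\<in>I. nsmul (n i) (alpha i))" "x - y = (\<Sum>i\<in>I. nsmul (m i) (alpha i))"
    by blast
  have "(\<Sum>i\<in>I. nsmul (n i + m i) (alpha i)) = (y - x) + (x - y)" using nm sum_nsmul_add by metis
  also have "\<dots> = (\<Sum>i\<in>I. nsmul ((\<lambda>_. 0::nat) i) (alpha i))" by simp
  finally have "\<forall>i\<in>I. n i + m i = 0" by (rule alpha_indep)
  then have "y - x = (\<Sum>i\<in>I. nsmul 0 (alpha i))" using nm(1) by simp
  then show "x = y" by simp
qed

lemma lt_irrefl: "\<not> x \<prec> x" by (simp add: wlt_def)
lemma lt_le_trans: "x \<prec> y \<Longrightarrow> y \<preceq> z \<Longrightarrow> x \<prec> z"
  unfolding wlt_def using le_trans le_antisym by blast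
lemma le_lt_trans: "x \<preceq> y \<Longrightarrow> y \<prec> z \<Longrightarrow> x \<prec> z"
  unfolding wlt_def using le_trans le_antisym by blast
lemma lt_imp_le: "x \<prec> y \<Longrightarrow> x \<preceq> y" by (simp add: wlt_def)

lemma finite_between: "finite {w. x \<preceq> w \<and> w \<preceq> l}"
proof (cases "x \<preceq> l")
  case False
  then have "{w. x \<preceq> w \<and> w \<preceq> l} = {}" using le_trans by blast
  then show ?thesis by (metis finite.emptyI)
next
  case True
  then obtain k where k: "l - x = (\<Sum>i\<in>I. nsmul (k i) (alpha i))" unfolding wle_def NI_iff by blast
  let ?f = "\<lambda>n. x + (\<Sum>i\<in>I. nsmul (n i) (alpha i))"
  have "{w. x \<preceq> w \<and> w \<preceq> l} \<subseteq> ?f ` (PiE I (\<lambda>i. {..k i}))"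
  proof
    fix w assume "w \<in> {w. x \<preceq> w \<and> w \<preceq> l}"
    then obtain n m where nm: "w - x = (\<Sum>i\<in>I. nsmul (n i) (alpha i))" "l - w = (\<Sum>i\<in>I. nsmul (m i) (alpha i))"
      unfolding wle_def NI_iff by blast
    have "(\<Sum>i\<in>I. nsmul (n i + m i) (alpha i)) = (w - x) + (l - w)" using nm sum_nsmul_add by metis
    also have "\<dots> = (\<Sum>i\<in>I. nsmul (k i) (alpha i))" using k by simp
    finally have nk: "\<forall>i\<in>I. n i + m i = k i" by (rule alpha_indep)
    have "restrict n I \<in> PiE I (\<lambda>i. {..k i})" using nk by auto
    moreover have "w = ?f (restrict n I)"
    proof -
      have "(\<Sum>i\<in>I. nsmul (restrict n I i) (alpha i)) = (\<Sum>i\<in>I. nsmul (n i) (alpha i))"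
        by (rule sum.cong) auto
      then show ?thesis using nm(1) by (simp add: algebra_simps)
    qed
    ultimately show "w \<in> ?f ` (PiE I (\<lambda>i. {..k i}))" by blast
  qed
  moreover have "finite (PiE I (\<lambda>i. {..k i}))" using I_fin by (intro finite_PiE) auto
  ultimately show ?thesis by (meson finite_imageI finite_subset)
qed

definition Sb :: "'w set" where "Sb = (SOME S. finite S \<and> (\<forall>b\<in>B. \<exists>l\<in>S. wt b \<preceq> l))"

lemma Sb: "finite Sb" "\<And>b. b \<in> B \<Longrightarrow> \<exists>l\<in>Sb. wt b \<preceq> l"
  using someI_ex[OF bounded] unfolding Sb_def by blast+

definition U :: "'w \<Rightarrow> 'w set" where "U x = {w. x \<preceq> w \<and> (\<exists>l\<in>Sb. w \<preceq> l)}"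

lemma finite_U: "finite (U x)"
proof -
  have "U x \<subseteq> (\<Union>l\<in>Sb. {w. x \<preceq> w \<and> w \<preceq> l})" unfolding U_def by blast
  moreover have "finite (\<Union>l\<in>Sb. {w. x \<preceq> w \<and> w \<preceq> l})" using Sb(1) finite_between by blast
  ultimately show ?thesis by (rule finite_subset)
qed

definition h :: "'w \<Rightarrow> nat" where "h x = card (U x)"

lemma h_less: assumes "b \<in> B" "x \<prec> wt b" shows "h (wt b) < h x"
proof -
  have "U (wt b) \<subseteq> U x" using assms(2) lt_imp_le le_trans unfolding U_def by blast
  moreover have "wt b \<in> U x" using assms Sb(2) lt_imp_le unfolding U_def by blast
  moreover have "wt b \<notin> U (wt b) - {wt b}" by simp
  moreover have "x \<notin> U (wt b)" using assms(2) le_antisym unfolding U_def wlt_def by blast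
  moreover have "x \<in> U x" using assms Sb(2) lt_imp_le le_refl le_trans unfolding U_def by blast
  ultimately have "U (wt b) \<subset> U x" by blast
  then show ?thesis unfolding h_def using finite_U by (simp add: psubset_card_mono)
qed

end


context qsp begin

definition coef :: "'m \<Rightarrow> 'm \<Rightarrow> qv" where "coef x b = representation B x b"

lemma inspan[simp]: "x \<in> span B" using spanB by simp

lemma coef_add: "coef (x + y) b = coef x b + coef y b"
  unfolding coef_def by (simp add: representation_add[OF indepB])
lemma coef_diff: "coef (x - y) b = coef x b - coef y b"
  unfolding coef_def by (simp add: representation_diff[OF indepB])
lemma coef_neg: "coef (- x) b = - coef x b"
  unfolding coef_def by (simp add: representation_neg[OF indepB])
lemma coef_scale: "coef (c *s x) b = c * coef x b"
  unfolding coef_def by (simp add: representation_scale[OF indepB])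
lemma coef_sum: "coef (sum f T) b = (\<Sum>t\<in>T. coef (f t) b)"
  unfolding coef_def by (simp add: representation_sum[OF indepB])
lemma coef_zero: "coef 0 b = 0"
  unfolding coef_def by (simp add: representation_zero)
lemma coef_basis: "t \<in> B \<Longrightarrow> coef t b = (if b = t then 1 else 0)"
  unfolding coef_def by (simp add: representation_basis[OF indepB])
lemma coef_ne: "coef x b \<noteq> 0 \<Longrightarrow> b \<in> B"
  unfolding coef_def by (rule representation_ne_zero)
lemma finite_coef: "finite {b. coef x b \<noteq> 0}"
  unfolding coef_def by (rule finite_representation)
lemma coef_expand: "x = (\<Sum>b | coef x b \<noteq> 0. coef x b *s b)"
  unfolding coef_def using sum_nonzero_representation_eq[OF indepB inspan] by simp
lemma coef_span: "x \<in> span S \<Longrightarrow> S \<subseteq> B \<Longrightarrow> coef x b \<noteq> 0 \<Longrightarrow> b \<in> S"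
  unfolding coef_def using representation_extend[OF indepB] representation_ne_zero by metis

lemma coef_eqI: assumes "\<And>b. coef x b = coef y b" shows "x = y"
proof -
  have "coef x = coef y" using assms by (rule ext)
  then show ?thesis using coef_expand[of x] coef_expand[of y] by simp
qed

abbreviation L where "L \<equiv> lattice sc"

lemma L_intro: "finite T \<Longrightarrow> T \<subseteq> S \<Longrightarrow> (\<And>t. t \<in> T \<Longrightarrow> c t \<in> R) \<Longrightarrow> x = (\<Sum>t\<in>T. c t *s t) \<Longrightarrow> x \<in> L R S"
  unfolding lattice_def mem_Collect_eq by (intro exI[of _ T] exI[of _ c]) blast

lemma L_elim: assumes "x \<in> L R S"
  obtains T c where "finite T" "T \<subseteq> S" "\<forall>t\<in>T. c t \<in> R" "x = (\<Sum>t\<in>T. c t *s t)"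
  using assms unfolding lattice_def mem_Collect_eq by blast

lemma L_char: assumes "S \<subseteq> B" "rng R"
  shows "L R S = {x. (\<forall>b. coef x b \<in> R) \<and> (\<forall>b. coef x b \<noteq> 0 \<longrightarrow> b \<in> S)}"
proof (intro set_eqI iffI)
  fix x assume "x \<in> L R S"
  then obtain T c where T: "finite T" "T \<subseteq> S" "\<forall>t\<in>T. c t \<in> R" "x = (\<Sum>t\<in>T. c t *s t)"
    unfolding lattice_def by blast
  have cx: "coef x b = (if b \<in> T then c b else 0)" for b
  proof -
    have "coef x b = (\<Sum>t\<in>T. c t * (if b = t then 1 else 0))"
      using T assms(1) by (auto simp: coef_sum coef_scale coef_basis intro!: sum.cong)
    also have "\<dots> = (\<Sum>t\<in>T. if b = t then c t else 0)" by (rule sum.cong) auto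
    also have "\<dots> = (if b \<in> T then c b else 0)" using T(1) by (simp add: sum.delta)
    finally show ?thesis .
  qed
  have "0 \<in> R" using assms(2) by (simp add: rng_def)
  then show "x \<in> {x. (\<forall>b. coef x b \<in> R) \<and> (\<forall>b. coef x b \<noteq> 0 \<longrightarrow> b \<in> S)}"
    using T(1-3) cx by auto
next
  fix x assume x: "x \<in> {x. (\<forall>b. coef x b \<in> R) \<and> (\<forall>b. coef x b \<noteq> 0 \<longrightarrow> b \<in> S)}"
  show "x \<in> L R S"
  proof (rule L_intro[where T="{b. coef x b \<noteq> 0}" and c="coef x"])
    show "finite {b. coef x b \<noteq> 0}" by (rule finite_coef)
    show "{b. coef x b \<noteq> 0} \<subseteq> S" using x by blast
    show "coef x t \<in> R" for t using x by blast
    show "x = (\<Sum>t | coef x t \<noteq> 0. coef x t *s t)" using coef_expand[of x] .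
  qed
qed

lemma rngD: assumes "rng R"
  shows "0 \<in> R" "a \<in> R \<Longrightarrow> b \<in> R \<Longrightarrow> a + b \<in> R" "a \<in> R \<Longrightarrow> b \<in> R \<Longrightarrow> a * b \<in> R"
    "a \<in> R \<Longrightarrow> - a \<in> R" "a \<in> R \<Longrightarrow> b \<in> R \<Longrightarrow> a - b \<in> R"
  using assms unfolding rng_def by (blast, blast, blast, blast, metis diff_conv_add_uminus)

lemma rng1D: "rng1 R \<Longrightarrow> rng R" "rng1 R \<Longrightarrow> 1 \<in> R" "rng1 R \<Longrightarrow> vinvZvinv \<subseteq> R"
  by (auto simp: rng1_def)

lemma L_0: "rng R \<Longrightarrow> 0 \<in> L R S"
  unfolding lattice_def by (intro CollectI exI[of _ "{}"]) simp

lemma L_single: "c \<in> R \<Longrightarrow> t \<in> S \<Longrightarrow> c *s t \<in> L R S"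
  unfolding lattice_def by (intro CollectI exI[of _ "{t}"] exI[of _ "\<lambda>_. c"]) simp

lemma L_base: "rng1 R \<Longrightarrow> t \<in> S \<Longrightarrow> t \<in> L R S"
  using L_single[of 1 R t S] rng1D by simp

lemma L_mono: "S \<subseteq> S' \<Longrightarrow> L R S \<subseteq> L R S'"
  unfolding lattice_def by blast

lemma L_mono_R: "R \<subseteq> R' \<Longrightarrow> L R S \<subseteq> L R' S"
  unfolding lattice_def by blast

lemma L_add: assumes "rng R" "x \<in> L R S" "y \<in> L R S" shows "x + y \<in> L R S"
proof -
  obtain T1 c1 where T1: "finite T1" "T1 \<subseteq> S" "\<forall>t\<in>T1. c1 t \<in> R" "x = (\<Sum>t\<in>T1. c1 t *s t)"
    using assms(2) unfolding lattice_def by blast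
  obtain T2 c2 where T2: "finite T2" "T2 \<subseteq> S" "\<forall>t\<in>T2. c2 t \<in> R" "y = (\<Sum>t\<in>T2. c2 t *s t)"
    using assms(3) unfolding lattice_def by blast
  define c where "c t = (if t \<in> T1 then c1 t else 0) + (if t \<in> T2 then c2 t else 0)" for t
  have "(\<Sum>t\<in>T1 \<union> T2. c t *s t) = (\<Sum>t\<in>T1 \<union> T2. (if t \<in> T1 then c1 t *s t else 0))
      + (\<Sum>t\<in>T1 \<union> T2. (if t \<in> T2 then c2 t *s t else 0))"
    unfolding sum.distrib[symmetric] by (rule sum.cong) (auto simp: c_def scale_left_distrib)
  also have "\<dots> = x + y"
    using T1 T2 sum.inter_restrict[of "T1 \<union> T2" "\<lambda>t. c1 t *s t" T1]
       sum.inter_restrict[of "T1 \<union> T2" "\<lambda>t. c2 t *s t" T2]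
    by (simp add: Int_absorb1 Int_absorb2)
  finally have "x + y = (\<Sum>t\<in>T1 \<union> T2. c t *s t)" by simp
  moreover have "\<forall>t\<in>T1 \<union> T2. c t \<in> R"
  proof
    fix t
    have "(if t \<in> T1 then c1 t else 0) \<in> R" "(if t \<in> T2 then c2 t else 0) \<in> R"
      using T1(3) T2(3) rngD(1)[OF assms(1)] by auto
    then show "c t \<in> R" unfolding c_def by (rule rngD(2)[OF assms(1)])
  qed
  ultimately show ?thesis using T1 T2 by (intro L_intro[of "T1 \<union> T2" S c]) auto
qed

lemma L_scale: assumes "rng R" "r \<in> R" "x \<in> L R S" shows "r *s x \<in> L R S"
proof -
  obtain T c where T: "finite T" "T \<subseteq> S" "\<forall>t\<in>T. c t \<in> R" "x = (\<Sum>t\<in>T. c t *s t)"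
    using assms(3) unfolding lattice_def by blast
  have "r *s x = (\<Sum>t\<in>T. (r * c t) *s t)" using T(4) by (simp add: scale_sum_right)
  moreover have "\<forall>t\<in>T. r * c t \<in> R" using T assms rngD(3)[OF assms(1)] by blast
  ultimately show ?thesis using T by (intro L_intro[of T S "\<lambda>t. r * c t"]) auto
qed

lemma L_neg: assumes "rng1 R" "x \<in> L R S" shows "- x \<in> L R S"
proof -
  have "(-1) \<in> R" using assms(1) rng1D rngD by blast
  then show ?thesis using L_scale[of R "-1" x S] assms rng1D by simp
qed

lemma L_diff: assumes "rng1 R" "x \<in> L R S" "y \<in> L R S" shows "x - y \<in> L R S"
  using L_add[OF rng1D(1)[OF assms(1)] assms(2) L_neg[OF assms(1,3)]] by simp

lemma L_sum: assumes "rng R" "\<And>t. t \<in> T \<Longrightarrow> f t \<in> L R S" shows "sum f T \<in> L R S"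
  using assms(2)
proof (induction T rule: infinite_finite_induct)
  case (infinite A) then show ?case using L_0[OF assms(1)] by simp
next
  case empty then show ?case using L_0[OF assms(1)] by simp
next
  case (insert x F)
  then have "f x \<in> L R S" "sum f F \<in> L R S" by auto
  from L_add[OF assms(1) this] insert.hyps show ?case by simp
qed

lemma L_closed:
  assumes "rng R" and L0: "0 \<in> M" and Ladd: "\<And>x y. x \<in> M \<Longrightarrow> y \<in> M \<Longrightarrow> x + y \<in> M"
    and Lsc: "\<And>r x. r \<in> R \<Longrightarrow> x \<in> M \<Longrightarrow> r *s x \<in> M" and S: "S \<subseteq> M"
  shows "L R S \<subseteq> M"
proof
  fix x assume "x \<in> L R S"
  then obtain T c where T: "finite T" "T \<subseteq> S" "\<forall>t\<in>T. c t \<in> R" "x = (\<Sum>t\<in>T. c t *s t)"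
    unfolding lattice_def by blast
  have "(\<Sum>t\<in>T. c t *s t) \<in> M" using T(1-3)
  proof (induction T rule: finite_induct)
    case empty then show ?case using L0 by simp
  next
    case (insert t F)
    then have "c t *s t \<in> M" "(\<Sum>t\<in>F. c t *s t) \<in> M" using Lsc S by auto
    from Ladd[OF this] insert.hyps show ?case by simp
  qed
  then show "x \<in> M" using T by simp
qed

lemma L_L: assumes "rng R" "S' \<subseteq> L R S" shows "L R S' \<subseteq> L R S"
  using assms by (intro L_closed) (auto intro: L_0 L_add L_scale)

lemma L_sub_span: "L R S \<subseteq> span S"
proof
  fix x assume "x \<in> L R S"
  then obtain T c where T: "finite T" "T \<subseteq> S" "\<forall>t\<in>T. c t \<in> R" "x = (\<Sum>t\<in>T. c t *s t)"
    by (rule L_elim)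
  have "(\<Sum>t\<in>T. c t *s t) \<in> span S"
    by (rule span_sum) (use T(2) in \<open>auto intro: span_scale span_base\<close>)
  then show "x \<in> span S" using T(4) by simp
qed

lemma L_img: assumes "inj_on g H" "x \<in> L R (g ` H)"
  shows "\<exists>T c. finite T \<and> T \<subseteq> H \<and> (\<forall>t\<in>T. c t \<in> R) \<and> x = (\<Sum>t\<in>T. c t *s g t)"
proof -
  obtain U c where U: "finite U" "U \<subseteq> g ` H" "\<forall>t\<in>U. c t \<in> R" "x = (\<Sum>t\<in>U. c t *s t)"
    using assms(2) unfolding lattice_def by blast
  define T where "T = {t\<in>H. g t \<in> U}"
  have gT: "g ` T = U" using U(2) unfolding T_def by blast
  have inj: "inj_on g T" using assms(1) unfolding T_def by (auto intro: inj_on_subset)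
  have fT: "finite T" using gT inj U(1) finite_imageD by blast
  have "x = (\<Sum>t\<in>T. c (g t) *s g t)" using U(4) gT sum.reindex[OF inj, of "\<lambda>u. c u *s u"] by simp
  moreover have TH: "T \<subseteq> H" unfolding T_def by auto
  moreover have "\<forall>t\<in>T. (c \<circ> g) t \<in> R" using U(3) gT by auto
  ultimately show ?thesis using fT by (intro exI[of _ T] exI[of _ "c \<circ> g"]) auto
qed

end


context qsp begin

abbreviation Ups where "Ups \<equiv> Ups_act ups"

lemma ups_hom: "module_hom sc sc (ups \<mu>)"
  using module_hom_iff_linear ups_lin by blast

lemma ups_add: "ups \<mu> (x + y) = ups \<mu> x + ups \<mu> y"
  using module_hom.add[OF ups_hom] by blast
lemma ups_scale: "ups \<mu> (c *s x) = c *s ups \<mu> x"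
  using module_hom.scale[OF ups_hom] by blast
lemma ups_sum: "ups \<mu> (sum f T) = (\<Sum>t\<in>T. ups \<mu> (f t))"
  using module_hom.sum[OF ups_hom] by blast

lemma supp_b: assumes "b \<in> B" shows "{\<mu>. ups \<mu> b \<noteq> 0} \<subseteq> (\<lambda>w. w - wt b) ` U (wt b)"
proof
  fix \<mu> assume "\<mu> \<in> {\<mu>. ups \<mu> b \<noteq> 0}"
  then have ne: "ups \<mu> b \<noteq> 0" by simp
  then have mu: "\<mu> \<in> NI I alpha" using ups_supp by metis
  have "{b'\<in>B. wt b' = wt b + \<mu>} \<noteq> {}"
  proof
    assume e: "{b'\<in>B. wt b' = wt b + \<mu>} = {}"
    have "ups \<mu> b \<in> span {}" using ups_wt[OF assms, of \<mu>] unfolding e .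
    then show False using ne by simp
  qed
  then obtain b' where b': "b' \<in> B" "wt b' = wt b + \<mu>" by blast
  have "wt b \<preceq> wt b'" using b'(2) mu by (simp add: wle_def)
  then have "wt b' \<in> U (wt b)" using Sb(2)[OF b'(1)] unfolding U_def by blast
  moreover have "\<mu> = wt b' - wt b" using b'(2) by simp
  ultimately show "\<mu> \<in> (\<lambda>w. w - wt b) ` U (wt b)" by blast
qed

lemma supp_fin: "finite {\<mu>. ups \<mu> x \<noteq> 0}"
proof -
  let ?T = "{b. coef x b \<noteq> 0}"
  have "{\<mu>. ups \<mu> x \<noteq> 0} \<subseteq> (\<Union>b\<in>?T. {\<mu>. ups \<mu> b \<noteq> 0})"
  proof
    fix \<mu> assume "\<mu> \<in> {\<mu>. ups \<mu> x \<noteq> 0}"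
    then have "ups \<mu> (\<Sum>b\<in>?T. coef x b *s b) \<noteq> 0" using coef_expand[of x] by simp
    then have "(\<Sum>b\<in>?T. coef x b *s ups \<mu> b) \<noteq> 0" by (simp add: ups_sum ups_scale)
    then obtain b where "b \<in> ?T" "coef x b *s ups \<mu> b \<noteq> 0" by (meson sum.neutral)
    then show "\<mu> \<in> (\<Union>b\<in>?T. {\<mu>. ups \<mu> b \<noteq> 0})" by auto
  qed
  moreover have "finite (\<Union>b\<in>?T. {\<mu>. ups \<mu> b \<noteq> 0})"
  proof (rule finite_UN_I[OF finite_coef])
    fix b assume "b \<in> ?T"
    then have "b \<in> B" using coef_ne by simp
    then show "finite {\<mu>. ups \<mu> b \<noteq> 0}"
      using supp_b finite_U finite_subset by blast
  qed
  ultimately show ?thesis by (rule finite_subset)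
qed

lemma Ups_eq: "finite F \<Longrightarrow> {\<mu>. ups \<mu> x \<noteq> 0} \<subseteq> F \<Longrightarrow> Ups x = (\<Sum>\<mu>\<in>F. ups \<mu> x)"
  unfolding Ups_act_def by (rule sum.mono_neutral_left) auto

lemma Ups_add: "Ups (x + y) = Ups x + Ups y"
proof -
  let ?F = "{\<mu>. ups \<mu> x \<noteq> 0} \<union> {\<mu>. ups \<mu> y \<noteq> 0} \<union> {\<mu>. ups \<mu> (x + y) \<noteq> 0}"
  have f: "finite ?F" using supp_fin by blast
  have "Ups (x + y) = (\<Sum>\<mu>\<in>?F. ups \<mu> (x + y))" by (rule Ups_eq[OF f]) blast
  also have "\<dots> = (\<Sum>\<mu>\<in>?F. ups \<mu> x) + (\<Sum>\<mu>\<in>?F. ups \<mu> y)" by (simp add: ups_add sum.distrib)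
  also have "\<dots> = Ups x + Ups y"
  proof -
    have "Ups x = (\<Sum>\<mu>\<in>?F. ups \<mu> x)" by (rule Ups_eq[OF f]) blast
    moreover have "Ups y = (\<Sum>\<mu>\<in>?F. ups \<mu> y)" by (rule Ups_eq[OF f]) blast
    ultimately show ?thesis by simp
  qed
  finally show ?thesis .
qed

lemma Ups_scale: "Ups (c *s x) = c *s Ups x"
proof -
  let ?F = "{\<mu>. ups \<mu> x \<noteq> 0} \<union> {\<mu>. ups \<mu> (c *s x) \<noteq> 0}"
  have f: "finite ?F" using supp_fin by blast
  have "Ups (c *s x) = (\<Sum>\<mu>\<in>?F. ups \<mu> (c *s x))" by (rule Ups_eq[OF f]) blast
  also have "\<dots> = c *s (\<Sum>\<mu>\<in>?F. ups \<mu> x)" by (simp add: ups_scale scale_sum_right)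
  also have "\<dots> = c *s Ups x"
  proof -
    have "Ups x = (\<Sum>\<mu>\<in>?F. ups \<mu> x)" by (rule Ups_eq[OF f]) blast
    then show ?thesis by simp
  qed
  finally show ?thesis .
qed

lemma Ups_zero: "Ups 0 = 0" using Ups_scale[of 0 0] by simp

lemma psi_zero: "psi 0 = 0" using psi_add[of 0 0] by simp

definition psii where "psii x = Ups (psi x)"

lemma psii_add: "psii (x + y) = psii x + psii y"
  by (simp add: psii_def psi_add Ups_add)
lemma psii_scale: "psii (c *s x) = qbar c *s psii x"
  by (simp add: psii_def psi_anti Ups_scale)
lemma psii_zero: "psii 0 = 0"
  by (simp add: psii_def psi_zero Ups_zero)
lemma psii_diff: "psii (x - y) = psii x - psii y"
  using psii_add[of "x - y" y] by (simp add: algebra_simps)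
lemma psii_sum: "psii (sum f T) = (\<Sum>t\<in>T. psii (f t))"
  by (induction T rule: infinite_finite_induct) (simp_all add: psii_zero psii_add)
lemma psii_psii: "psii (psii x) = x"
  using psii_inv by (simp add: psii_def)

definition hi where "hi b = {b'\<in>B. wt b \<prec> wt b'}"
definition ge where "ge b = {b'\<in>B. wt b \<preceq> wt b'}"

lemma hi_sub: "hi b \<subseteq> B" by (auto simp: hi_def)
lemma ge_sub: "ge b \<subseteq> B" by (auto simp: ge_def)

lemma psii_B: assumes b: "b \<in> B" shows "psii b - b \<in> span (hi b)"
proof -
  let ?F = "insert 0 {\<mu>. ups \<mu> b \<noteq> 0}"
  have f: "finite ?F" using supp_fin by blast
  have "psii b = (\<Sum>\<mu>\<in>?F. ups \<mu> b)" unfolding psii_def psi_B[OF b] by (rule Ups_eq[OF f]) blast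
  also have "\<dots> = ups 0 b + (\<Sum>\<mu>\<in>?F - {0}. ups \<mu> b)" using f by (simp add: sum.insert_remove)
  finally have e: "psii b - b = (\<Sum>\<mu>\<in>?F - {0}. ups \<mu> b)" using ups_0 by simp
  have "ups \<mu> b \<in> span (hi b)" if "\<mu> \<noteq> 0" for \<mu>
  proof (cases "\<mu> \<in> NI I alpha")
    case False
    then show ?thesis using ups_supp[OF False] span_zero by simp
  next
    case True
    have "{b'\<in>B. wt b' = wt b + \<mu>} \<subseteq> hi b"
      using True that unfolding hi_def wlt_def wle_def by auto
    then show ?thesis using ups_wt[OF b, of \<mu>] span_mono by blast
  qed
  then show ?thesis unfolding e by (intro span_sum) auto
qed

lemma psii_b_lattice: assumes b: "b \<in> B" shows "psii b - b \<in> L Aring (hi b)"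
proof -
  have bL: "b \<in> L Aring B" using L_base[OF rng1_A b] .
  then have "psii b \<in> L Aring B" using psii_lattice unfolding psii_def by blast
  then have d: "psii b - b \<in> L Aring B" using L_diff[OF rng1_A _ bL] by blast
  show ?thesis unfolding L_char[OF hi_sub rng_A]
  proof (intro CollectI conjI allI impI)
    fix b' show "coef (psii b - b) b' \<in> Aring" using d unfolding L_char[OF subset_refl rng_A] by blast
  next
    fix b' assume "coef (psii b - b) b' \<noteq> 0"
    then show "b' \<in> hi b" using coef_span[OF psii_B[OF b] hi_sub] by blast
  qed
qed

lemma TRI:
  assumes T: "finite T" "T \<subseteq> B" and d: "\<And>t. t \<in> T \<Longrightarrow> d t - t \<in> span (hi t)"
    and t0: "t0 \<in> T" and a: "\<And>t. t \<in> T \<Longrightarrow> a t \<noteq> 0 \<Longrightarrow> \<not> wt t \<prec> wt t0"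
  shows "coef (\<Sum>t\<in>T. a t *s d t) t0 = a t0"
proof -
  have "a t * coef (d t) t0 = (if t = t0 then a t0 else 0)" if t: "t \<in> T" for t
  proof -
    have cd: "coef (d t) t0 = coef t t0 + coef (d t - t) t0" by (simp add: coef_diff)
    have c2: "coef (d t - t) t0 \<noteq> 0 \<Longrightarrow> wt t \<prec> wt t0"
      using coef_span[OF d[OF t] hi_sub] unfolding hi_def by blast
    show ?thesis
    proof (cases "t = t0")
      case True
      then show ?thesis using cd c2 lt_irrefl coef_basis[of t] t T by auto
    next
      case False
      then have "coef t t0 = 0" using coef_basis[of t t0] t T by auto
      then show ?thesis using cd c2 a[OF t] False by auto
    qed
  qed
  then have "coef (\<Sum>t\<in>T. a t *s d t) t0 = (\<Sum>t\<in>T. if t = t0 then a t0 else 0)"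
    by (simp add: coef_sum coef_scale)
  also have "\<dots> = a t0" using T t0 by simp
  finally show ?thesis .
qed

lemma MAXH: assumes "finite N" "N \<noteq> {}" "N \<subseteq> B"
  shows "\<exists>t0\<in>N. \<forall>t\<in>N. \<not> wt t \<prec> wt t0"
proof -
  have "Max ((\<lambda>t. h (wt t)) ` N) \<in> (\<lambda>t. h (wt t)) ` N" using assms by (intro Max_in) auto
  then obtain t0 where t0: "t0 \<in> N" "h (wt t0) = Max ((\<lambda>t. h (wt t)) ` N)"
    by (metis (no_types, lifting) imageE)
  have "\<not> wt t \<prec> wt t0" if "t \<in> N" for t
  proof
    assume "wt t \<prec> wt t0"
    then have "h (wt t0) < h (wt t)" using h_less t0 assms by blast
    moreover have "h (wt t) \<le> h (wt t0)" using t0 that assms by simp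
    ultimately show False by simp
  qed
  then show ?thesis using t0 by blast
qed

lemma IND:
  assumes H: "H \<subseteq> B" and g: "\<And>t. t \<in> H \<Longrightarrow> g t - t \<in> span (hi t)"
    and T: "finite T" "T \<subseteq> H" and s: "(\<Sum>t\<in>T. c t *s g t) = 0"
  shows "\<forall>t\<in>T. c t = 0"
proof (rule ccontr)
  assume "\<not> (\<forall>t\<in>T. c t = 0)"
  then have "{t\<in>T. c t \<noteq> 0} \<noteq> {}" by blast
  then obtain t0 where t0: "t0 \<in> T" "c t0 \<noteq> 0" "\<forall>t\<in>{t\<in>T. c t \<noteq> 0}. \<not> wt t \<prec> wt t0"
    using MAXH[of "{t\<in>T. c t \<noteq> 0}"] T H by auto
  have "coef (\<Sum>t\<in>T. c t *s g t) t0 = c t0"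
    using T H g t0 by (intro TRI) auto
  then show False using s t0 by (simp add: coef_zero)
qed

lemma IND_inj: assumes H: "H \<subseteq> B" and g: "\<And>t. t \<in> H \<Longrightarrow> g t - t \<in> span (hi t)"
  shows "inj_on g H"
proof
  fix x y assume xy: "x \<in> H" "y \<in> H" "g x = g y"
  show "x = y"
  proof (rule ccontr)
    assume ne: "x \<noteq> y"
    let ?c = "\<lambda>t. if t = x then 1 else (-1 :: qv)"
    have "(\<Sum>t\<in>{x, y}. ?c t *s g t) = 0" using ne xy by simp
    then have "\<forall>t\<in>{x,y}. ?c t = 0" using xy by (intro IND[OF H g]) auto
    then show False by simp
  qed
qed

lemma IND_indep: assumes H: "H \<subseteq> B" and g: "\<And>t. t \<in> H \<Longrightarrow> g t - t \<in> span (hi t)"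
  shows "independent (g ` H)"
  unfolding independent_explicit_finite_subsets
proof (intro allI impI ballI)
  fix S u v assume S: "S \<subseteq> g ` H" "finite S" and su: "(\<Sum>v\<in>S. u v *s v) = 0" and v: "v \<in> S"
  have inj: "inj_on g H" by (rule IND_inj[OF H g])
  define T where "T = {t\<in>H. g t \<in> S}"
  have gT: "g ` T = S" using S unfolding T_def by blast
  have injT: "inj_on g T" using inj unfolding T_def by (auto intro: inj_on_subset)
  have fT: "finite T" using gT injT S(2) finite_imageD by blast
  have "(\<Sum>t\<in>T. u (g t) *s g t) = 0" using su gT sum.reindex[OF injT, of "\<lambda>v. u v *s v"] by simp
  then have "\<forall>t\<in>T. u (g t) = 0" using fT H g unfolding T_def by (intro IND[OF H g]) auto
  then show "u v = 0" using v gT by blast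
qed

lemma UNIQ: assumes x: "x \<in> L vinvZvinv B" and inv: "psii x = x" shows "x = 0"
proof (rule ccontr)
  assume "x \<noteq> 0"
  let ?N = "{b. coef x b \<noteq> 0}"
  have NB: "?N \<subseteq> B" using coef_ne by blast
  have "?N \<noteq> {}"
  proof
    assume "?N = {}"
    then have "x = 0" using coef_expand[of x] by simp
    with \<open>x \<noteq> 0\<close> show False by simp
  qed
  then obtain t0 where t0: "t0 \<in> ?N" "\<forall>t\<in>?N. \<not> wt t \<prec> wt t0"
    using MAXH[OF finite_coef _ NB] by blast
  have cV: "coef x t0 \<in> vinvZvinv" using x unfolding L_char[OF subset_refl rng_V] by blast
  have "psii x = (\<Sum>b\<in>?N. qbar (coef x b) *s psii b)"
    by (subst coef_expand[of x]) (simp add: psii_sum psii_scale)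
  then have "coef (psii x) t0 = qbar (coef x t0)"
  proof -
    assume e: "psii x = (\<Sum>b\<in>?N. qbar (coef x b) *s psii b)"
    have "coef (\<Sum>b\<in>?N. qbar (coef x b) *s psii b) t0 = qbar (coef x t0)"
    proof (rule TRI[OF finite_coef NB])
      show "psii t - t \<in> span (hi t)" if "t \<in> ?N" for t using psii_B that NB by blast
      show "t0 \<in> ?N" by (rule t0(1))
      show "\<not> wt t \<prec> wt t0" if "t \<in> ?N" "qbar (coef x t) \<noteq> 0" for t using t0(2) that by blast
    qed
    then show ?thesis using e by simp
  qed
  then have "qbar (coef x t0) = coef x t0" using inv by simp
  then have "coef x t0 = 0" using qbar_V_fixed cV by blast
  then show False using t0 by simp
qed

lemma INV:
  assumes R: "rng1 R"
    and up: "\<And>l l'. P l \<Longrightarrow> l \<preceq> l' \<Longrightarrow> P l'"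
    and g: "\<And>b. b \<in> B \<Longrightarrow> P (wt b) \<Longrightarrow> g b - b \<in> L R (hi b)"
  shows "b \<in> B \<Longrightarrow> P (wt b) \<Longrightarrow> b \<in> L R (g ` ge b)"
proof (induction "h (wt b)" arbitrary: b rule: less_induct)
  case less
  let ?M = "L R (g ` ge b)"
  have rR: "rng R" using R by (rule rng1D)
  have "hi b \<subseteq> ?M"
  proof
    fix t assume t: "t \<in> hi b"
    then have tB: "t \<in> B" and bt: "wt b \<prec> wt t" by (auto simp: hi_def)
    have "h (wt t) < h (wt b)" using h_less[OF tB bt] .
    moreover have "P (wt t)" using up[OF less.prems(2) lt_imp_le[OF bt]] .
    ultimately have "t \<in> L R (g ` ge t)" using less.hyps tB by blast
    moreover have "ge t \<subseteq> ge b" using bt lt_imp_le le_trans unfolding ge_def by blast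
    ultimately show "t \<in> ?M" using L_mono[of "g ` ge t" "g ` ge b" R] by blast
  qed
  then have "L R (hi b) \<subseteq> ?M" using L_L[OF rR] by blast
  then have d: "g b - b \<in> ?M" using g[OF less.prems] by blast
  have "b \<in> ge b" using less.prems(1) le_refl unfolding ge_def by blast
  then have gb: "g b \<in> ?M" using L_base[OF R] by blast
  have "b = g b - (g b - b)" by simp
  then show ?case using L_diff[OF R gb d] by simp
qed

end


context qsp begin

definition good where "good b y \<longleftrightarrow> psii y = y \<and> y - b \<in> L vinvZvinv (hi b)"
definition Gc where "Gc b = (SOME y. good b y)"

lemma good_span: "good b y \<Longrightarrow> y - b \<in> span (hi b)"
  unfolding good_def using L_sub_span by blast

lemma V_sub_A: "vinvZvinv \<subseteq> Aring" using rng1D(3)[OF rng1_A] .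

lemma hi_trans: "t \<in> hi b \<Longrightarrow> hi t \<subseteq> hi b"
  unfolding hi_def using lt_imp_le le_lt_trans by blast

lemma ge_hi: "t \<in> hi b \<Longrightarrow> ge t \<subseteq> hi b"
  unfolding hi_def ge_def using lt_le_trans by blast

lemma EX: "b \<in> B \<Longrightarrow> \<exists>y. good b y"
proof (induction "h (wt b)" arbitrary: b rule: less_induct)
  case less
  have bB: "b \<in> B" by fact
  have IH: "good t (Gc t)" if t: "t \<in> hi b" for t
  proof -
    have "t \<in> B" "wt b \<prec> wt t" using t by (auto simp: hi_def)
    then have "\<exists>y. good t y" using less.hyps h_less by blast
    then show ?thesis unfolding Gc_def by (rule someI_ex)
  qed
  have gsp: "\<And>t. t \<in> hi b \<Longrightarrow> Gc t - t \<in> span (hi t)" using IH good_span by blast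
  have inj: "inj_on Gc (hi b)" by (rule IND_inj[OF hi_sub gsp])
  have "t \<in> L Aring (Gc ` hi b)" if t: "t \<in> hi b" for t
  proof -
    have "t \<in> L Aring (Gc ` ge t)"
    proof (rule INV[OF rng1_A, where P="\<lambda>l. wt b \<prec> l"])
      show "wt b \<prec> l'" if "wt b \<prec> l" "l \<preceq> l'" for l l' using that lt_le_trans by blast
      show "Gc t' - t' \<in> L Aring (hi t')" if "t' \<in> B" "wt b \<prec> wt t'" for t'
      proof -
        have "t' \<in> hi b" using that by (simp add: hi_def)
        then show ?thesis using IH L_mono_R[OF V_sub_A] unfolding good_def by blast
      qed
      show "t \<in> B" "wt b \<prec> wt t" using t by (auto simp: hi_def)
    qed
    then show ?thesis using L_mono[of "Gc ` ge t" "Gc ` hi b" Aring] ge_hi[OF t] by blast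
  qed
  then have "L Aring (hi b) \<subseteq> L Aring (Gc ` hi b)" using L_L[OF rng_A] by blast
  then have "psii b - b \<in> L Aring (Gc ` hi b)" using psii_b_lattice[OF bB] by blast
  from L_img[OF inj this] obtain T s where T: "finite T" "T \<subseteq> hi b" "\<forall>t\<in>T. s t \<in> Aring"
      and sX: "psii b - b = (\<Sum>t\<in>T. s t *s Gc t)"
    by (elim exE conjE) blast
  have Gfix: "\<And>t. t \<in> T \<Longrightarrow> psii (Gc t) = Gc t" using IH T(2) unfolding good_def by blast
  have "b = psii (psii b)" by (simp add: psii_psii)
  also have "\<dots> = psii (b + (\<Sum>t\<in>T. s t *s Gc t))" using sX by (simp add: algebra_simps)
  also have "\<dots> = psii b + (\<Sum>t\<in>T. qbar (s t) *s Gc t)"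
    using Gfix by (simp add: psii_add psii_sum psii_scale)
  also have "\<dots> = b + (\<Sum>t\<in>T. (s t + qbar (s t)) *s Gc t)"
    using sX by (simp add: scale_left_distrib sum.distrib algebra_simps)
  finally have "(\<Sum>t\<in>T. (s t + qbar (s t)) *s Gc t) = 0" by simp
  then have anti: "\<forall>t\<in>T. s t + qbar (s t) = 0"
    using IND[where c="\<lambda>t. s t + qbar (s t)", OF hi_sub gsp T(1) T(2)] by simp
  have "\<forall>t\<in>T. \<exists>c\<in>vinvZvinv. c - qbar c = s t"
  proof
    fix t assume "t \<in> T"
    then have "s t \<in> Aring" "qbar (s t) = - s t" using anti T(3) by (auto simp: eq_neg_iff_add_eq_0 add.commute)
    then show "\<exists>c\<in>vinvZvinv. c - qbar c = s t" by (rule qbar_A_anti)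
  qed
  then obtain c where c: "\<forall>t\<in>T. c t \<in> vinvZvinv \<and> c t - qbar (c t) = s t" by metis
  define y where "y = b + (\<Sum>t\<in>T. c t *s Gc t)"
  have "psii y = psii b + (\<Sum>t\<in>T. qbar (c t) *s Gc t)"
    unfolding y_def using Gfix by (simp add: psii_add psii_sum psii_scale)
  also have "\<dots> = b + (\<Sum>t\<in>T. (s t + qbar (c t)) *s Gc t)"
    using sX by (simp add: scale_left_distrib sum.distrib algebra_simps)
  also have "\<dots> = y"
    unfolding y_def using c by (intro arg_cong[where f="\<lambda>z. b + z"] sum.cong) (auto simp: algebra_simps)
  finally have inv: "psii y = y" .
  have "(\<Sum>t\<in>T. c t *s Gc t) \<in> L vinvZvinv (hi b)"
  proof (rule L_sum[OF rng_V])
    fix t assume t: "t \<in> T"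
    have "c t *s Gc t = c t *s t + c t *s (Gc t - t)" by (simp add: scale_right_diff_distrib)
    moreover have "c t *s t \<in> L vinvZvinv (hi b)" using t T(2) c by (intro L_single) auto
    moreover have "c t *s (Gc t - t) \<in> L vinvZvinv (hi b)"
    proof -
      have "Gc t - t \<in> L vinvZvinv (hi t)" using IH t T(2) unfolding good_def by blast
      then have "c t *s (Gc t - t) \<in> L vinvZvinv (hi t)" using c t by (intro L_scale[OF rng_V]) auto
      then show ?thesis using L_mono[OF hi_trans] t T(2) by blast
    qed
    ultimately show "c t *s Gc t \<in> L vinvZvinv (hi b)" using L_add[OF rng_V] by simp
  qed
  then have "y - b \<in> L vinvZvinv (hi b)" by (simp add: y_def)
  then show ?case using inv unfolding good_def by blast
qed

lemma good_Gc: "b \<in> B \<Longrightarrow> good b (Gc b)"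
  unfolding Gc_def using EX by (rule someI_ex) simp

abbreviation props where
  "props g \<equiv> g \<in> extensional B
            \<and> inj_on g B \<and> module.independent sc (g ` B) \<and> module.span sc (g ` B) = UNIV
            \<and> (\<forall>b\<in>B. Ups_act ups (psi (g b)) = g b
                     \<and> g b - b \<in> lattice sc vinvZvinv {b'\<in>B. wlt I alpha (wt b) (wt b')})"

lemma props_good: "props g \<Longrightarrow> b \<in> B \<Longrightarrow> good b (g b)"
  unfolding good_def psii_def hi_def by blast

lemma part2: assumes R: "rng1 R" and g: "props g"
  shows "lattice_basis sc R (g ` B) (lattice sc R B)"
  unfolding lattice_basis_def
proof
  have ind: "independent (g ` B)" using g by simp
  show "indep_over sc R (g ` B)"
    unfolding indep_over_def using ind unfolding independent_explicit_finite_subsets by blast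
  have gd: "\<And>b. b \<in> B \<Longrightarrow> g b - b \<in> L R (hi b)"
    using props_good[OF g] L_mono_R[OF rng1D(3)[OF R]] unfolding good_def by blast
  show "L R (g ` B) = L R B"
  proof
    show "L R (g ` B) \<subseteq> L R B"
    proof (rule L_L[OF rng1D(1)[OF R]])
      show "g ` B \<subseteq> L R B"
      proof
        fix x assume "x \<in> g ` B"
        then obtain b where b: "b \<in> B" "x = g b" by blast
        have "g b - b \<in> L R B" using gd[OF b(1)] L_mono[OF hi_sub] by blast
        moreover have "b \<in> L R B" using L_base[OF R b(1)] .
        ultimately have "(g b - b) + b \<in> L R B" by (rule L_add[OF rng1D(1)[OF R]])
        then show "x \<in> L R B" using b by simp
      qed
    qed
    show "L R B \<subseteq> L R (g ` B)"
    proof (rule L_L[OF rng1D(1)[OF R]])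
      show "B \<subseteq> L R (g ` B)"
      proof
        fix b assume b: "b \<in> B"
        have "b \<in> L R (g ` ge b)" by (rule INV[OF R, where P="\<lambda>_. True"]) (use gd b in auto)
        then show "b \<in> L R (g ` B)" using L_mono[of "g ` ge b" "g ` B" R] ge_sub by blast
      qed
    qed
  qed
qed

lemma part1: "\<exists>!g. props g"
proof (rule ex1I)
  let ?g = "restrict Gc B"
  have gd: "\<And>b. b \<in> B \<Longrightarrow> good b (?g b)" using good_Gc by simp
  have gsp: "\<And>b. b \<in> B \<Longrightarrow> ?g b - b \<in> span (hi b)" using gd good_span by blast
  have inj: "inj_on ?g B" by (rule IND_inj[OF subset_refl gsp])
  have ind: "independent (?g ` B)" by (rule IND_indep[OF subset_refl gsp])
  have "B \<subseteq> span (?g ` B)"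
  proof
    fix b assume b: "b \<in> B"
    have "b \<in> L Aring (?g ` ge b)"
      by (rule INV[OF rng1_A, where P="\<lambda>_. True"]) (use gd b L_mono_R[OF V_sub_A] in \<open>auto simp: good_def\<close>)
    then have "b \<in> span (?g ` ge b)" using L_sub_span by blast
    then show "b \<in> span (?g ` B)" using span_mono[of "?g ` ge b" "?g ` B"] ge_sub by blast
  qed
  then have "span B \<subseteq> span (?g ` B)" using span_mono span_span by metis
  then have sp: "span (?g ` B) = UNIV" using spanB by blast
  show "props ?g" using inj ind sp gd unfolding good_def psii_def hi_def by auto
next
  fix g assume g: "props g"
  show "g = restrict Gc B"
  proof (rule extensionalityI[of g B])
    show "g \<in> extensional B" using g by blast
    show "restrict Gc B \<in> extensional B" by simp
    fix b assume b: "b \<in> B"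
    have g1: "good b (g b)" by (rule props_good[OF g b])
    have g2: "good b (Gc b)" by (rule good_Gc[OF b])
    let ?d = "g b - Gc b"
    have "psii ?d = ?d" using g1 g2 by (simp add: good_def psii_diff)
    moreover have "?d \<in> L vinvZvinv B"
    proof -
      define x1 where "x1 = g b - b"
      define x2 where "x2 = Gc b - b"
      have "x1 \<in> L vinvZvinv (hi b)" "x2 \<in> L vinvZvinv (hi b)" using g1 g2 by (auto simp: good_def x1_def x2_def)
      then have h1: "\<forall>a. coef x1 a \<in> vinvZvinv \<and> (coef x1 a \<noteq> 0 \<longrightarrow> a \<in> hi b)"
          and h2: "\<forall>a. coef x2 a \<in> vinvZvinv \<and> (coef x2 a \<noteq> 0 \<longrightarrow> a \<in> hi b)"
        unfolding L_char[OF hi_sub rng_V] by auto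
      have "x1 - x2 \<in> L vinvZvinv (hi b)"
        unfolding L_char[OF hi_sub rng_V] mem_Collect_eq coef_diff
      proof (intro conjI allI impI)
        fix a show "coef x1 a - coef x2 a \<in> vinvZvinv" using h1 h2 rngD(5)[OF rng_V] by blast
      next
        fix a assume "coef x1 a - coef x2 a \<noteq> 0"
        then have "coef x1 a \<noteq> 0 \<or> coef x2 a \<noteq> 0" by auto
        then show "a \<in> hi b" using h1 h2 by blast
      qed
      moreover have "x1 - x2 = ?d" by (simp add: x1_def x2_def)
      ultimately show ?thesis using L_mono[OF hi_sub[of b], of vinvZvinv] by auto
    qed
    ultimately have "?d = 0" using UNIQ by blast
    then show "g b = restrict Gc B b" using b by simp
  qed
qed

lemma main:
  "(\<exists>!g. props g) \<and> (\<forall>g. props g \<longrightarrow> lattice_basis sc Aring (g ` B) (lattice sc Aring B)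
              \<and> lattice_basis sc Zvinv (g ` B) (lattice sc Zvinv B))"
  using part1 part2[OF rng1_A] part2[OF rng1_Z] by blast

end

theorem mainTheorem2:
  fixes sc :: "qv \<Rightarrow> 'm::ab_group_add \<Rightarrow> 'm"
    and B :: "'m set"
    and wt :: "'m \<Rightarrow> 'w::ab_group_add"
    and I :: "'i set" and alpha :: "'i \<Rightarrow> 'w"
    and psi :: "'m \<Rightarrow> 'm"
    and ups :: "'w \<Rightarrow> 'm \<Rightarrow> 'm"
  assumes vs: "vector_space sc"
    \<comment> \<open>weight lattice order: simple roots, simple roots linearly independent in X, so that \<le> is a partial order\<close>
    and I_fin: "finite I"
    and alpha_indep: "\<And>n m. (\<Sum>i\<in>I. nsmul (n i) (alpha i)) = (\<Sum>i\<in>I. nsmul (m i) (alpha i))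
                        \<Longrightarrow> \<forall>i\<in>I. n i = m i"
    \<comment> \<open>B is a basis of M consisting of weight vectors\<close>
    and B_basis: "module.independent sc B" "module.span sc B = UNIV"
    \<comment> \<open>weights bounded above\<close>
    and bounded: "\<exists>S. finite S \<and> (\<forall>b\<in>B. \<exists>l\<in>S. wle I alpha (wt b) l)"
    \<comment> \<open>bar involution psi: anti-linear involution fixing B\<close>
    and psi_add: "\<And>x y. psi (x + y) = psi x + psi y"
    and psi_anti: "\<And>c x. psi (sc c x) = sc (qbar c) (psi x)"
    and psi_inv: "\<And>x. psi (psi x) = x"
    and psi_B: "\<And>b. b \<in> B \<Longrightarrow> psi b = b"
    \<comment> \<open>quasi K-matrix Upsilon = sum of Upsilon_mu, mu in N I, Upsilon_0 = 1,
        Upsilon_mu linear and mapping M_lambda to M_(lambda+mu)\<close>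
    and ups_lin: "\<And>\<mu>. Vector_Spaces.linear sc sc (ups \<mu>)"
    and ups_0: "ups 0 = id"
    and ups_supp: "\<And>\<mu>. \<mu> \<notin> NI I alpha \<Longrightarrow> ups \<mu> = (\<lambda>_. 0)"
    and ups_wt: "\<And>\<mu> b. b \<in> B \<Longrightarrow>
                   ups \<mu> b \<in> module.span sc {b'\<in>B. wt b' = wt b + \<mu>}"
    \<comment> \<open>psi_imath = Upsilon o psi is an involution preserving the A-lattice\<close>
    and psii_inv: "\<And>x. Ups_act ups (psi (Ups_act ups (psi x))) = x"
    and psii_lattice: "(\<lambda>x. Ups_act ups (psi x)) ` lattice sc Aring B \<subseteq> lattice sc Aring B"
  shows "(\<exists>!g. g \<in> extensional B
            \<and> inj_on g B \<and> module.independent sc (g ` B) \<and> module.span sc (g ` B) = UNIV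
            \<and> (\<forall>b\<in>B. Ups_act ups (psi (g b)) = g b
                     \<and> g b - b \<in> lattice sc vinvZvinv {b'\<in>B. wlt I alpha (wt b) (wt b')}))
         \<and> (\<forall>g. (g \<in> extensional B
            \<and> inj_on g B \<and> module.independent sc (g ` B) \<and> module.span sc (g ` B) = UNIV
            \<and> (\<forall>b\<in>B. Ups_act ups (psi (g b)) = g b
                     \<and> g b - b \<in> lattice sc vinvZvinv {b'\<in>B. wlt I alpha (wt b) (wt b')}))
            \<longrightarrow> lattice_basis sc Aring (g ` B) (lattice sc Aring B)
              \<and> lattice_basis sc Zvinv (g ` B) (lattice sc Zvinv B))"
  proof -
  interpret qsp sc B wt I alpha psi ups
  proof (rule qsp.intro[OF vs], rule qsp_axioms.intro)
    show "finite I" by (fact I_fin)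
    show "\<And>n m. (\<Sum>i\<in>I. nsmul (n i) (alpha i)) = (\<Sum>i\<in>I. nsmul (m i) (alpha i)) \<Longrightarrow> \<forall>i\<in>I. n i = m i"
      by (fact alpha_indep)
  qed (fact B_basis bounded psi_add psi_anti psi_B ups_lin ups_0 ups_supp ups_wt psii_inv psii_lattice)+
  show ?thesis using main .
qed

end
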